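(* Let $V$ be a finite set of nails and let $T$ be a commutator tree over $V$ whose leaves are words $t_1, \dots, t_m \in F(V)$ with $t_i$ solving a specification $g_i$ on $V$, and let $f = g_1 \vee \cdots \vee g_m$. Then (the value of) $T$ solves $f$ if and only if there is no internal node $u$ of $T$ and no $S \subseteq V$ with $f(S) = \mathsf{hang}$ such that the value of $u$ satisfies $(\mathrm{val}(u))|_S = 0$. In particular, $T$ solves $f$ if, for every $S$ with $f(S) = \mathsf{hang}$ and every internal node $u$, the specifications $\phi_1, \phi_2$ solved by the values of the two children of $u$ separate above $S$, i.e.\ there is $S'$ with $S \subseteq S' \subseteq V$ and $\phi_1(S') \neq \phi_2(S')$.
   Context: Words are elements of the free group $F(V)$ on a finite set $V$ of nails, written additively ($+$ group operation, $-$ inverse, $0$ identity). The commutator is $[a,b] = a + b - a - b$. A commutator tree is a finite rooted binary tree whose leaves are labelled by words; the value of a leaf is its label, the value of an internal node with left child $u_1$ and right child $u_2$ is $[\mathrm{val}(u_1), \mathrm{val}(u_2)]$, and the value of the tree is the value of its root. For $S \subseteq V$, $h|_S$ is the image of $h$ under the homomorphism killing the generators in $S$. A specification on $V$ is a monotone function $f: 2^V \to \{\mathsf{hang}, \mathsf{fall}\}$ with $f(V) = \mathsf{fall}$, where $\mathsf{hang} < \mathsf{fall}$ and monotone means $S \subseteq S' \Rightarrow f(S) \le f(S')$. A word $h$ solves $f$ if for every $S \subseteq V$: $h|_S = 0 \iff f(S) = \mathsf{fall}$. $\vee$ is the pointwise $\max$ with respect to $\mathsf{hang} < \mathsf{fall}$.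 Every word in $F(V)$ solves the specification $S \mapsto (\mathsf{fall}$ if $h|_S=0$, else $\mathsf{hang})$. *)

theory Defs
  imports Main
begin

type_synonym 'a word = "('a \<times> bool) list"

text \<open>A letter (v,False) is the generator v, (v,True) is its inverse -v.
  A word denotes an element of F(V); two words denote the same element iff
  their free reductions agree.\<close>

fun cons_red :: "('a \<times> bool) \<Rightarrow> 'a word \<Rightarrow> 'a word" where
  "cons_red x [] = [x]"
| "cons_red x (y # ys) =
     (if fst x = fst y \<and> snd x \<noteq> snd y then ys else x # y # ys)"

definition reduce :: "'a word \<Rightarrow> 'a word" where
  "reduce w = foldr cons_red w []"

definition is_zero :: "'a word \<Rightarrow> bool" where
  "is_zero w \<longleftrightarrow> reduce w = []"

definition winv :: "'a word \<Rightarrow> 'a word" where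
  "winv w = rev (map (\<lambda>(v, e). (v, \<not> e)) w)"

definition comm :: "'a word \<Rightarrow> 'a word \<Rightarrow> 'a word" where
  "comm a b = a @ b @ winv a @ winv b"

text \<open>h|_S: image under the homomorphism killing the generators in S.\<close>
definition kill :: "'a set \<Rightarrow> 'a word \<Rightarrow> 'a word" where
  "kill S w = filter (\<lambda>(v, e). v \<notin> S) w"

definition word_over :: "'a set \<Rightarrow> 'a word \<Rightarrow> bool" where
  "word_over V w \<longleftrightarrow> fst ` set w \<subseteq> V"

datatype 'w ctree = Leaf 'w | Node "'w ctree" "'w ctree"

fun cval :: "'a word ctree \<Rightarrow> 'a word" where
  "cval (Leaf w) = w"
| "cval (Node l r) = comm (cval l) (cval r)"

fun leaves :: "'w ctree \<Rightarrow> 'w list" where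
  "leaves (Leaf w) = [w]"
| "leaves (Node l r) = leaves l @ leaves r"

text \<open>Internal nodes, represented by the subtrees rooted at them.\<close>
fun internal_nodes :: "'w ctree \<Rightarrow> 'w ctree set" where
  "internal_nodes (Leaf w) = {}"
| "internal_nodes (Node l r) = insert (Node l r) (internal_nodes l \<union> internal_nodes r)"

datatype outcome = Hang | Fall

definition out_le :: "outcome \<Rightarrow> outcome \<Rightarrow> bool" where
  "out_le x y \<longleftrightarrow> x = Hang \<or> y = Fall"

definition out_join :: "outcome \<Rightarrow> outcome \<Rightarrow> outcome" where
  "out_join x y = (if x = Fall \<or> y = Fall then Fall else Hang)"

text \<open>A specification on V: a function on subsets of V (values outside 2^V irrelevant).\<close>
definition is_spec :: "'a set \<Rightarrow> ('a set \<Rightarrow> outcome) \<Rightarrow> bool" where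
  "is_spec V f \<longleftrightarrow>
     (\<forall>S S'. S \<subseteq> S' \<and> S' \<subseteq> V \<longrightarrow> out_le (f S) (f S')) \<and> f V = Fall"

definition solves :: "'a set \<Rightarrow> 'a word \<Rightarrow> ('a set \<Rightarrow> outcome) \<Rightarrow> bool" where
  "solves V h f \<longleftrightarrow> (\<forall>S. S \<subseteq> V \<longrightarrow> (is_zero (kill S h) \<longleftrightarrow> f S = Fall))"

definition spec_join :: "nat \<Rightarrow> (nat \<Rightarrow> 'a set \<Rightarrow> outcome) \<Rightarrow> 'a set \<Rightarrow> outcome" where
  "spec_join m g = (\<lambda>S. foldr out_join (map (\<lambda>i. g i S) [0..<m]) Hang)"

end

theory Submission
  imports Defs
begin

definition il :: "'a \<times> bool \<Rightarrow> 'a \<times> bool" where "il x = (fst x, \<not> snd x)"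

lemma il_il[simp]: "il (il x) = x" by (simp add: il_def)
lemma il_neq[simp]: "il x \<noteq> x" "x \<noteq> il x" by (auto simp: il_def prod_eq_iff)
lemma il_inj[simp]: "il x = il y \<longleftrightarrow> x = y" by (auto simp: il_def prod_eq_iff)
lemma il_swap: "x = il y \<longleftrightarrow> y = il x" by auto
lemma fst_il[simp]: "fst (il x) = fst x" by (simp add: il_def)

lemma cons_red_Cons[simp]: "cons_red x (y # ys) = (if y = il x then ys else x # y # ys)"
  by (cases x; cases y; auto simp: il_def)

declare cons_red.simps(2)[simp del]

fun red :: "'a word \<Rightarrow> bool" where
  "red (x # y # ys) = (y \<noteq> il x \<and> red (y # ys))"
| "red _ = True"

lemma red_Cons: "red (x # w) \<longleftrightarrow> red w \<and> (w \<noteq> [] \<longrightarrow> hd w \<noteq> il x)"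
  by (cases w) auto

lemma red_append: "red (xs @ ys) \<longleftrightarrow> red xs \<and> red ys \<and> (xs \<noteq> [] \<longrightarrow> ys \<noteq> [] \<longrightarrow> hd ys \<noteq> il (last xs))"
proof (induction xs)
  case Nil then show ?case by simp
next
  case (Cons x xs)
  then show ?case by (cases xs) (auto simp: red_Cons)
qed

lemma reduce_Nil[simp]: "reduce [] = []" by (simp add: reduce_def)
lemma reduce_Cons: "reduce (x # w) = cons_red x (reduce w)" by (simp add: reduce_def)
lemma reduce_append: "reduce (xs @ ys) = foldr cons_red xs (reduce ys)" by (simp add: reduce_def)

lemma red_cons_red: "red w \<Longrightarrow> red (cons_red x w)"
  by (cases w) (auto simp: cons_red_Cons red_Cons)

lemma red_foldr: "red z \<Longrightarrow> red (foldr cons_red x z)"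
  by (induction x) (auto intro: red_cons_red)

lemma red_reduce: "red (reduce w)"
  unfolding reduce_def by (rule red_foldr) simp

lemma reduce_red: "red w \<Longrightarrow> reduce w = w"
proof (induction w)
  case Nil then show ?case by simp
next
  case (Cons x w)
  then show ?case by (cases w) (auto simp: reduce_Cons cons_red_Cons red_Cons)
qed

lemma cancel: "red r \<Longrightarrow> cons_red (il a) (cons_red a r) = r"
proof (cases r)
  case Nil then show ?thesis by (simp add: cons_red_Cons)
next
  case (Cons y r')
  assume "red r"
  show ?thesis
  proof (cases "y = il a")
    case True
    then show ?thesis using Cons \<open>red r\<close>
      by (cases r') (auto simp: cons_red_Cons red_Cons)
  next
    case False
    then show ?thesis using Cons by (auto simp: cons_red_Cons)
  qed
qed

lemma cancel': "red r \<Longrightarrow> cons_red a (cons_red (il a) r) = r"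
  using cancel[of r "il a"] by simp

lemma foldr_cons_red: "red w \<Longrightarrow> red z \<Longrightarrow>
   foldr cons_red (cons_red a w) z = cons_red a (foldr cons_red w z)"
proof (cases w)
  case Nil then show ?thesis by simp
next
  case (Cons y w')
  assume "red w" "red z"
  show ?thesis
  proof (cases "y = il a")
    case True
    then have "red (foldr cons_red w' z)" using \<open>red z\<close> by (intro red_foldr)
    then show ?thesis using Cons True by (simp add: cons_red_Cons cancel')
  next
    case False
    then show ?thesis using Cons by (simp add: cons_red_Cons)
  qed
qed

lemma foldr_reduce: "red z \<Longrightarrow> foldr cons_red (reduce x) z = foldr cons_red x z"
  by (induction x) (auto simp: reduce_Cons foldr_cons_red red_reduce)

lemma reduce_reduce_left: "reduce (reduce x @ y) = reduce (x @ y)"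
  by (simp add: reduce_append foldr_reduce red_reduce)

lemma reduce_reduce_right: "reduce (x @ reduce y) = reduce (x @ y)"
  by (simp add: reduce_append reduce_red red_reduce)

lemma winv_alt: "winv w = rev (map il w)"
  unfolding winv_def il_def by (induction w) auto

lemma winv_Cons: "winv (x # w) = winv w @ [il x]" by (simp add: winv_alt)
lemma winv_Nil[simp]: "winv [] = []" by (simp add: winv_alt)
lemma winv_winv[simp]: "winv (winv w) = w" by (simp add: winv_alt rev_map comp_def)

lemma reduce_winv_cancel: "reduce (winv w @ w) = []"
proof (induction w)
  case Nil then show ?case by simp
next
  case (Cons x w)
  have "reduce (winv (x # w) @ x # w) = foldr cons_red (winv w) (cons_red (il x) (cons_red x (reduce w)))"
    by (simp add: winv_Cons reduce_append reduce_Cons)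
  also have "\<dots> = reduce (winv w @ w)" by (simp add: cancel red_reduce reduce_append)
  finally show ?case using Cons by simp
qed

lemma winv_Nil_iff[simp]: "winv w = [] \<longleftrightarrow> w = []" by (simp add: winv_alt)

lemma hd_winv: "w \<noteq> [] \<Longrightarrow> hd (winv w) = il (last w)" by (simp add: winv_alt hd_rev last_map)
lemma last_winv: "w \<noteq> [] \<Longrightarrow> last (winv w) = il (hd w)" by (simp add: winv_alt last_rev hd_map)

lemma red_winv: "red w \<Longrightarrow> red (winv w)"
proof (induction w)
  case Nil then show ?case by simp
next
  case (Cons x w)
  then show ?case by (auto simp: winv_Cons red_append red_Cons last_winv)
qed

typedef 'a fg = "{w :: 'a word. red w}" morphisms Rep_fg Abs_fg
  by (rule exI[of _ "[]"]) simp

definition G :: "'a word \<Rightarrow> 'a fg" where "G w = Abs_fg (reduce w)"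

lemma Rep_G: "Rep_fg (G w) = reduce w"
  by (simp add: G_def Abs_fg_inverse red_reduce)

lemma red_Rep: "red (Rep_fg a)" using Rep_fg by simp

lemma G_Rep[simp]: "G (Rep_fg a) = a"
  by (simp add: G_def reduce_red red_Rep Rep_fg_inverse)

lemma G_eq: "G x = G y \<longleftrightarrow> reduce x = reduce y"
  by (simp add: G_def Abs_fg_inject red_reduce)

lemma G_reduce[simp]: "G (reduce w) = G w"
  by (simp add: G_eq reduce_red red_reduce)

instantiation fg :: (type) group_add
begin
definition zero_fg_def: "0 = G []"
definition plus_fg_def: "a + b = G (Rep_fg a @ Rep_fg b)"
definition uminus_fg_def: "- a = G (winv (Rep_fg a))"
definition minus_fg_def: "a - b = a + - (b :: 'a fg)"
instance
proof
  fix a b c :: "'a fg"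
  show "a + b + c = a + (b + c)"
    by (simp add: plus_fg_def Rep_G G_eq reduce_reduce_left reduce_reduce_right)
  show "0 + a = a" by (simp add: plus_fg_def zero_fg_def Rep_G)
  show "a + 0 = a" by (simp add: plus_fg_def zero_fg_def Rep_G)
  show "- a + a = 0"
    by (simp add: plus_fg_def zero_fg_def uminus_fg_def Rep_G G_eq reduce_reduce_left reduce_winv_cancel)
  show "a + - b = a - b" by (simp add: minus_fg_def)
qed
end

lemma G_append: "G (x @ y) = G x + G y"
  by (simp add: plus_fg_def Rep_G G_eq reduce_reduce_left reduce_reduce_right)

lemma G_Nil: "G [] = 0" by (simp add: zero_fg_def)

lemma G_winv: "G (winv w) = - G w"
proof -
  have "G w + G (winv w) = 0"
  proof -
    have "G (w @ winv w) = G []" using reduce_winv_cancel[of "winv w"] by (simp add: G_eq)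
    then show ?thesis by (simp add: G_append G_Nil)
  qed
  then show ?thesis by (simp add: minus_unique)
qed

lemma G_Cons: "G (x # w) = G [x] + G w" using G_append[of "[x]" w] by simp

lemma G_il: "G [il x] = - G [x]"
  using G_winv[of "[x]"] by (simp add: winv_alt)

lemma is_zero_G: "is_zero w \<longleftrightarrow> G w = 0"
  by (simp add: is_zero_def G_Nil[symmetric] G_eq)

lemma Rep_zero: "Rep_fg (0::'a fg) = []" by (simp add: zero_fg_def Rep_G)


fun npow :: "'b::monoid_add \<Rightarrow> nat \<Rightarrow> 'b" where
  "npow a 0 = 0"
| "npow a (Suc n) = a + npow a n"

definition zp :: "'b::group_add \<Rightarrow> int \<Rightarrow> 'b" where
  "zp a p = (if 0 \<le> p then npow a (nat p) else - npow a (nat (- p)))"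

lemma zp_nat[simp]: "zp a (int m) = npow a m" by (simp add: zp_def)
lemma zp_neg: "zp a (- int m) = - npow a m"
  by (cases "m = 0") (simp_all add: zp_def)
lemma zp_0[simp]: "zp a 0 = 0" by (simp add: zp_def)
lemma npow_zero[simp]: "npow (0::'b::monoid_add) n = 0" by (induction n) auto

lemma npow_conj: "npow (x + y + - x) n = x + npow y n + - (x::'b::group_add)"
proof (induction n)
  case 0 then show ?case by simp
next
  case (Suc n)
  have "npow (x + y + - x) (Suc n) = (x + y + - x) + (x + npow y n + - x)"
    using Suc by (simp only: npow.simps)
  also have "\<dots> = x + npow y (Suc n) + - x"
    by (simp only: npow.simps add.assoc minus_add_cancel)
  finally show ?case .
qed

lemma zp_conj: "zp (x + y + - x) p = x + zp y p + - (x::'b::group_add)"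
  unfolding zp_def npow_conj by (cases "0 \<le> p") (simp_all only: if_True if_False minus_add minus_minus add.assoc)

lemma hom_zero: "(\<And>a b. h (a + b) = h a + h b) \<Longrightarrow> h (0::'b::group_add) = (0::'c::group_add)"
  by (metis add.right_neutral add_left_cancel)

lemma hom_minus: "(\<And>a b. h (a + b) = h a + h b) \<Longrightarrow> h (- (a::'b::group_add)) = - (h a :: 'c::group_add)"
  by (metis hom_zero minus_unique right_minus)

lemma hom_npow: "(\<And>a b. h (a + b) = h a + h b) \<Longrightarrow> h (npow (a::'b::group_add) n) = npow (h a :: 'c::group_add) n"
  by (induction n) (auto simp: hom_zero)

lemma hom_zp: "(\<And>a b. h (a + b) = h a + h b) \<Longrightarrow> h (zp (a::'b::group_add) p) = zp (h a :: 'c::group_add) p"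
  by (simp add: zp_def hom_npow hom_minus)

lemma commute_minus: "(a::'b::group_add) + b = b + a \<Longrightarrow> - a + b = b + - a"
proof -
  assume h: "a + b = b + a"
  have "- a + b = - a + (b + a) + - a" by (simp only: add.assoc right_minus add_0_right)
  also have "\<dots> = - a + (a + b) + - a" using h by simp
  also have "\<dots> = b + - a" by (simp only: add.assoc minus_add_cancel)
  finally show ?thesis .
qed

lemma commute_conj: "(a::'b::group_add) + b = b + a \<Longrightarrow>
   (x + a + - x) + (x + b + - x) = (x + b + - x) + (x + a + - x)"
proof -
  assume h: "a + b = b + a"
  have "(x + a + - x) + (x + b + - x) = x + (a + b) + - x" by (simp only: add.assoc minus_add_cancel)
  also have "\<dots> = x + (b + a) + - x" using h by simp
  also have "\<dots> = (x + b + - x) + (x + a + - x)" by (simp only: add.assoc minus_add_cancel)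
  finally show ?thesis .
qed

lemma commute_from_comm: "(a::'b::group_add) + b + - a + - b = 0 \<Longrightarrow> a + b = b + a"
proof -
  assume h: "a + b + - a + - b = 0"
  have "a + b + - a = (a + b + - a + - b) + b" by (simp only: add.assoc left_minus add_0_right)
  also have "\<dots> = b" using h by (simp only: add_0_left)
  finally have "a + b + - a + a = b + a" by (simp only:)
  then show ?thesis by (simp only: add.assoc left_minus add_0_right)
qed

lemma kill_Cons: "kill S (x # w) = (if fst x \<in> S then kill S w else x # kill S w)"
  by (cases x) (simp add: kill_def)
lemma kill_Nil[simp]: "kill S [] = []" by (simp add: kill_def)
lemma kill_append: "kill S (x @ y) = kill S x @ kill S y" by (simp add: kill_def)
lemma kill_kill: "S \<subseteq> S' \<Longrightarrow> kill S' (kill S w) = kill S' w"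
  by (auto simp: kill_def intro!: filter_cong)

lemma reduce_kill_cons_red: "reduce (kill S (cons_red x r)) = reduce (kill S (x # r))"
proof (cases r)
  case Nil then show ?thesis by (simp add: cons_red.simps)
next
  case (Cons y r')
  show ?thesis
  proof (cases "y = il x")
    case True
    have "reduce (kill S (x # il x # r')) = reduce (kill S r')"
    proof (cases "fst x \<in> S")
      case True then show ?thesis by (simp add: kill_Cons)
    next
      case False then show ?thesis
        by (simp add: kill_Cons reduce_Cons cancel' red_reduce del: cons_red_Cons)
    qed
    then show ?thesis using Cons True by simp
  next
    case False then show ?thesis using Cons by simp
  qed
qed

lemma reduce_kill_reduce: "reduce (kill S (reduce w)) = reduce (kill S w)"
proof (induction w)
  case Nil then show ?case by simp
next
  case (Cons a w)
  have "reduce (kill S (reduce (a # w))) = reduce (kill S (a # reduce w))"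
    by (simp add: reduce_Cons reduce_kill_cons_red)
  also have "\<dots> = reduce (kill S (a # w))"
    using Cons by (simp add: kill_Cons reduce_Cons)
  finally show ?case .
qed

definition K :: "'a set \<Rightarrow> 'a fg \<Rightarrow> 'a fg" where "K S a = G (kill S (Rep_fg a))"

lemma G_kill: "G (kill S w) = K S (G w)"
  by (simp add: K_def Rep_G G_eq reduce_kill_reduce)

lemma K_add: "K S (a + b) = K S a + K S b"
proof -
  have "K S (a + b) = G (kill S (Rep_fg a @ Rep_fg b))"
    by (simp only: plus_fg_def G_kill)
  also have "\<dots> = G (kill S (Rep_fg a)) + G (kill S (Rep_fg b))"
    by (simp only: kill_append G_append)
  also have "\<dots> = K S a + K S b" by (simp only: K_def)
  finally show ?thesis .
qed

lemma K_zp: "K S (zp a p) = zp (K S a) p"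
  by (rule hom_zp) (rule K_add)

lemma K_minus: "K S (- a) = - K S a"
  by (rule hom_minus) (rule K_add)

lemma K_K: "S \<subseteq> S' \<Longrightarrow> K S' (K S a) = K S' a"
  by (simp add: K_def Rep_G G_eq reduce_kill_reduce kill_kill)

lemma G_comm: "G (comm a b) = G a + G b + - G a + - G b"
  by (simp only: comm_def G_append G_winv add.assoc)


lemma split_word: "length w \<ge> 2 \<Longrightarrow> w = hd w # butlast (tl w) @ [last w]"
  by (cases w; cases "tl w") auto

lemma G_Cons_snoc: "G (y # w @ [z]) = G [y] + G w + G [z]"
proof -
  have "y # w @ [z] = [y] @ (w @ [z])" by simp
  then show ?thesis by (simp only: G_append add.assoc)
qed

lemma zp_uminus: "zp a (- p) = - zp a p"
  by (simp add: zp_def)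

lemma G_npow_concat: "G (concat (replicate n w)) = npow (G w) n"
  by (induction n) (auto simp: G_append G_Nil)

lemma red_concat_rep: "red w \<Longrightarrow> (w \<noteq> [] \<longrightarrow> hd w \<noteq> il (last w)) \<Longrightarrow> red (concat (replicate n w))"
proof (induction n)
  case 0 then show ?case by simp
next
  case (Suc n)
  then show ?case by (cases n) (auto simp: red_append)
qed

lemma noncyc_split:
  assumes "red w" "w \<noteq> []" "hd w = il (last w)"
  obtains x w' where "w = x # w' @ [il x]" "red w'" "length w' < length w"
proof -
  have "length w \<ge> 2"
  proof (rule ccontr)
    assume "\<not> length w \<ge> 2"
    then have "length w = 1" using assms(2) by (cases w) (auto simp: Suc_le_eq)
    then obtain y where "w = [y]" by (cases w) auto
    then show False using assms(3) by simp
  qed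
  then have w: "w = hd w # butlast (tl w) @ [il (hd w)]"
    using split_word[of w] assms(3) by (metis il_il)
  moreover have "red (butlast (tl w))" using assms(1) w
    by (metis red_append red_Cons)
  moreover have "length (butlast (tl w)) < length w" using assms(2) by (cases w) auto
  ultimately show ?thesis using that by blast
qed

lemma torsion_free: "npow (a :: 'a fg) n = 0 \<Longrightarrow> 0 < n \<Longrightarrow> a = 0"
proof (induction "length (Rep_fg a)" arbitrary: a rule: less_induct)
  case less
  define w where "w = Rep_fg a"
  have rw: "red w" using red_Rep w_def by simp
  have aw: "a = G w" using w_def by simp
  show ?case
  proof (cases "w = []")
    case True then show ?thesis using aw by (simp add: G_Nil)
  next
    case ne: False
    show ?thesis
    proof (cases "hd w = il (last w)")
      case False
      have "red (concat (replicate n w))" using rw False by (intro red_concat_rep) auto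
      then have "Rep_fg (npow a n) = concat (replicate n w)"
        using aw by (simp add: G_npow_concat[symmetric] Rep_G reduce_red)
      moreover have "concat (replicate n w) \<noteq> []" using ne less.prems(2) by (cases n) auto
      ultimately show ?thesis using less.prems(1) by (simp add: Rep_zero)
    next
      case True
      obtain x w' where w': "w = x # w' @ [il x]" "red w'" "length w' < length w"
        using noncyc_split[OF rw ne True] by blast
      define X where "X = G [x]"
      have a: "a = X + G w' + - X" using aw w' unfolding X_def
        by (simp only: G_Cons_snoc G_il)
      have "npow a n = X + npow (G w') n + - X" unfolding a by (rule npow_conj)
      then have "npow (G w') n = 0" using less.prems(1)
        by (metis add.right_neutral add_minus_cancel add_right_cancel minus_add_cancel add.assoc)
      moreover have "length (Rep_fg (G w')) < length (Rep_fg a)"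
        using w' w_def by (simp add: Rep_G reduce_red)
      ultimately have "G w' = 0" using less.hyps less.prems(2) by blast
      then show ?thesis using a by simp
    qed
  qed
qed

lemma zp_eq_0: "p \<noteq> 0 \<Longrightarrow> zp (a :: 'a fg) p = 0 \<longleftrightarrow> a = 0"
  using torsion_free[of a "nat p"] torsion_free[of a "nat (- p)"]
  by (auto simp: zp_def)


lemma list_comm:
  assumes "red (c @ b)" "red (b @ c)" "G c + G b = G b + G c"
  shows "\<exists>z p q. G c = zp z p \<and> G b = zp z q"
proof -
  have "G (c @ b) = G (b @ c)" using assms(3) by (simp add: G_append)
  then have "c @ b = b @ c" using assms(1,2) by (simp add: G_eq reduce_red)
  then obtain m n r where "concat (replicate m r) = c" "concat (replicate n r) = b"
    using comm_append_are_replicate by blast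
  then have "G c = zp (G r) (int m)" "G b = zp (G r) (int n)"
    by (auto simp: G_npow_concat)
  then show ?thesis by blast
qed

lemma conj_back:
  assumes "G c' = x + G c + - x" "G b' = x + G b + - x"
    and "G c' = zp z p" "G b' = zp z q"
  shows "\<exists>z p q. G c = zp z p \<and> G b = zp z q"
proof -
  have "G c = - x + G c' + - (- x)" using assms(1)
    by (simp only: add.assoc minus_add_cancel minus_minus left_minus add_0_right)
  moreover have "G b = - x + G b' + - (- x)" using assms(2)
    by (simp only: add.assoc minus_add_cancel minus_minus left_minus add_0_right)
  ultimately have "G c = zp (- x + z + - (- x)) p" "G b = zp (- x + z + - (- x)) q"
    using assms(3,4) by (simp_all only: zp_conj)
  then show ?thesis by blast
qed

lemma cyc:
  "red c \<Longrightarrow> c \<noteq> [] \<Longrightarrow> hd c \<noteq> il (last c) \<Longrightarrow> red b \<Longrightarrow> G c + G b = G b + G c \<Longrightarrow>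
   \<exists>z p q. G c = zp z p \<and> G b = zp z q"
proof (induction "length b" arbitrary: b c rule: less_induct)
  case less
  note rc = less.prems(1) and cne = less.prems(2) and cyc = less.prems(3)
    and rb = less.prems(4) and cm = less.prems(5)
  show ?case
  proof (cases "b = []")
    case True
    then have "G c = zp (G c) 1" "G b = zp (G c) 0" by (simp_all add: G_Nil zp_def)
    then show ?thesis by blast
  next
    case bne: False
    define f l s t where "f = hd c" "l = last c" "s = hd b" "t = last b"
    have fl: "f \<noteq> il l" "l \<noteq> il f" using cyc f_l_s_t_def by (auto simp: il_swap)
    show ?thesis
    proof (cases "s \<noteq> il l \<and> t \<noteq> il f")
      case True
      have "red (c @ b)" "red (b @ c)" using True rc rb cne bne f_l_s_t_def
        by (auto simp: red_append il_swap)
      then show ?thesis using list_comm cm by blast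
    next
      case nP: False
      show ?thesis
      proof (cases "s \<noteq> f \<and> t \<noteq> l")
        case True
        have "red (winv c @ b)" "red (b @ winv c)" using True rc rb cne bne f_l_s_t_def
          by (auto simp: red_append red_winv hd_winv last_winv)
        moreover have "G (winv c) + G b = G b + G (winv c)"
          using cm by (simp add: G_winv commute_minus)
        ultimately obtain z p q where "G (winv c) = zp z p" "G b = zp z q"
          using list_comm by blast
        then have "G c = zp z (- p)" "G b = zp z q"
          by (metis G_winv zp_uminus minus_minus)+
        then show ?thesis by blast
      next
        case nM: False
        have lb2: "length b \<ge> 2"
        proof (rule ccontr)
          assume "\<not> length b \<ge> 2"
          then obtain y where "b = [y]" using bne by (cases b) (auto simp: Suc_le_eq)
          then have "s = t" using f_l_s_t_def by simp
          then show False using nP nM fl by auto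
        qed
        have bsplit: "b = s # butlast (tl b) @ [t]" using split_word[OF lb2] f_l_s_t_def by simp
        define b' where "b' = butlast (tl b)"
        have rb': "red b'" using rb bsplit b'_def by (metis red_append red_Cons)
        have lb': "length b' < length b" using bne b'_def by (cases b) auto
        have "(s = il l \<and> t = l) \<or> (s = f \<and> t = il f)" using nP nM fl by auto
        then show ?thesis
        proof
          assume st: "s = il l \<and> t = l"
          define c0 where "c0 = butlast c"
          have csplit: "c = c0 @ [l]" using cne c0_def f_l_s_t_def by simp
          define c' where "c' = l # c0"
          define x where "x = G [l]"
          have "red c0" "c0 \<noteq> [] \<longrightarrow> l \<noteq> il (last c0)" using rc csplit by (auto simp: red_append)
          moreover have "c0 \<noteq> [] \<longrightarrow> hd c0 = f" unfolding f_l_s_t_def by (metis csplit hd_append2)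
          ultimately have rc': "red c'" and cyc': "hd c' \<noteq> il (last c')"
            using fl unfolding c'_def by (auto simp: red_Cons il_swap)
          have e0: "G c = G c0 + x" using csplit x_def by (simp only: G_append)
          have "G c' = x + G c0" unfolding c'_def x_def by (rule G_Cons)
          then have e1: "G c' = x + G c + - x" using e0
            by (simp only: add.assoc right_minus add_0_right)
          have bs: "b = il l # b' @ [l]" using bsplit st b'_def by simp
          have "G b = - x + G b' + x" unfolding bs x_def by (simp only: G_Cons_snoc G_il)
          then have e2: "G b' = x + G b + - x"
            by (simp only: add.assoc add_minus_cancel right_minus add_0_right)
          have "G c' + G b' = G b' + G c'" unfolding e1 e2 using cm by (rule commute_conj)
          then obtain z p q where "G c' = zp z p" "G b' = zp z q"
            using less.hyps[OF lb' rc' _ cyc' rb'] c'_def by blast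
          then show ?thesis using conj_back e1 e2 by blast
        next
          assume st: "s = f \<and> t = il f"
          define c0 where "c0 = tl c"
          have csplit: "c = f # c0" using cne c0_def f_l_s_t_def by simp
          define c' where "c' = c0 @ [f]"
          define x where "x = G [f]"
          have "red c0" "c0 \<noteq> [] \<longrightarrow> hd c0 \<noteq> il f" using rc csplit by (auto simp: red_Cons)
          moreover have "c0 \<noteq> [] \<longrightarrow> last c0 = l" unfolding f_l_s_t_def by (metis csplit last_ConsR)
          ultimately have rc': "red c'" and cyc': "hd c' \<noteq> il (last c')"
            using fl unfolding c'_def by (auto simp: red_append il_swap hd_append)
          have e0: "G c = x + G c0" unfolding csplit x_def by (rule G_Cons)
          have "G c' = G c0 + x" unfolding c'_def x_def by (rule G_append)
          then have e1: "G c' = - x + G c + - (- x)" using e0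
            by (simp only: add.assoc minus_add_cancel minus_minus)
          have bs: "b = f # b' @ [il f]" using bsplit st b'_def by simp
          have "G b = x + G b' + - x" unfolding bs x_def by (simp only: G_Cons_snoc G_il)
          then have e2: "G b' = - x + G b + - (- x)"
            by (simp only: add.assoc minus_add_cancel minus_minus left_minus add_0_right)
          have "G c' + G b' = G b' + G c'" unfolding e1 e2 using cm by (rule commute_conj)
          then obtain z p q where "G c' = zp z p" "G b' = zp z q"
            using less.hyps[OF lb' rc' _ cyc' rb'] c'_def by blast
          then show ?thesis using conj_back e1 e2 by blast
        qed
      qed
    qed
  qed
qed

lemma centralizer: "(a :: 'a fg) + b = b + a \<Longrightarrow> \<exists>z p q. a = zp z p \<and> b = zp z q"
proof (induction "length (Rep_fg a)" arbitrary: a b rule: less_induct)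
  case less
  define w where "w = Rep_fg a"
  have rw: "red w" using red_Rep w_def by simp
  have aw: "a = G w" using w_def by simp
  show ?case
  proof (cases "w = []")
    case True
    then have "a = zp b 0" "b = zp b 1" using aw by (simp_all add: G_Nil zp_def)
    then show ?thesis by blast
  next
    case ne: False
    show ?thesis
    proof (cases "hd w = il (last w)")
      case False
      have "G w + G (Rep_fg b) = G (Rep_fg b) + G w" using less.prems aw by simp
      then show ?thesis using cyc[OF rw ne False red_Rep] aw by simp
    next
      case True
      obtain x w' where w': "w = x # w' @ [il x]" "red w'" "length w' < length w"
        using noncyc_split[OF rw ne True] by blast
      define X where "X = G [x]"
      have a: "a = X + G w' + - X" using aw w' unfolding X_def
        by (simp only: G_Cons_snoc G_il)
      have e1: "G w' = - X + a + - (- X)" using a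
        by (simp only: add.assoc minus_add_cancel minus_minus left_minus add_0_right)
      define b' where "b' = - X + b + - (- X)"
      have "G w' + b' = b' + G w'" unfolding e1 b'_def using less.prems by (rule commute_conj)
      moreover have "length (Rep_fg (G w')) < length (Rep_fg a)"
        using w' w_def by (simp add: Rep_G reduce_red)
      ultimately obtain z p q where "G w' = zp z p" "b' = zp z q" using less.hyps by blast
      moreover have "b = X + b' + - X" unfolding b'_def
        by (simp only: add.assoc add_minus_cancel minus_minus right_minus add_0_right)
      ultimately have "a = zp (X + z + - X) p" "b = zp (X + z + - X) q"
        using a by (simp_all only: zp_conj)
      then show ?thesis by blast
    qed
  qed
qed


abbreviation Z :: "'a set \<Rightarrow> 'a word \<Rightarrow> bool" where "Z S w \<equiv> is_zero (kill S w)"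

lemma Z_G: "Z S w \<longleftrightarrow> K S (G w) = 0" by (simp add: is_zero_G G_kill)

lemma Z_Node: "K S (G (cval (Node l r))) =
   K S (G (cval l)) + K S (G (cval r)) + - K S (G (cval l)) + - K S (G (cval r))"
  by (simp only: cval.simps G_comm K_add K_minus)

lemma leaf_zero_root: "w \<in> set (leaves t) \<Longrightarrow> Z S w \<Longrightarrow> Z S (cval t)"
proof (induction t)
  case (Leaf x) then show ?case by simp
next
  case (Node l r)
  then have "Z S (cval l) \<or> Z S (cval r)" by auto
  then show ?case unfolding Z_G Z_Node by auto
qed

lemma node_zero_root: "u \<in> internal_nodes t \<Longrightarrow> Z S (cval u) \<Longrightarrow> Z S (cval t)"
proof (induction t)
  case (Leaf x) then show ?case by simp
next
  case (Node l r)
  show ?case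
  proof (cases "u = Node l r")
    case True then show ?thesis using Node by simp
  next
    case False
    then have "Z S (cval l) \<or> Z S (cval r)" using Node by auto
    then show ?thesis unfolding Z_G Z_Node by auto
  qed
qed

lemma sub_nodes: "u \<in> internal_nodes t \<Longrightarrow> internal_nodes u \<subseteq> internal_nodes t \<and> set (leaves u) \<subseteq> set (leaves t)"
proof (induction t)
  case (Leaf x) then show ?case by simp
next
  case (Node l r)
  then show ?case by auto
qed

lemma minimal_node: "(\<forall>w\<in>set (leaves t). \<not> Z S w) \<Longrightarrow> Z S (cval t) \<Longrightarrow>
  \<exists>l r. Node l r \<in> internal_nodes t \<and> Z S (cval (Node l r)) \<and> \<not> Z S (cval l) \<and> \<not> Z S (cval r)"
proof (induction t)
  case (Leaf x) then show ?case by simp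
next
  case (Node l r)
  show ?case
  proof (cases "Z S (cval l)")
    case True then show ?thesis using Node by fastforce
  next
    case False
    show ?thesis
    proof (cases "Z S (cval r)")
      case True then show ?thesis using Node by fastforce
    next
      case False2: False
      then show ?thesis using Node False by auto
    qed
  qed
qed

lemma foldr_join: "foldr out_join xs z = Fall \<longleftrightarrow> Fall \<in> set xs \<or> z = Fall"
  by (induction xs) (auto simp: out_join_def)

lemma spec_join_Fall: "spec_join m g S = Fall \<longleftrightarrow> (\<exists>i<m. g i S = Fall)"
  by (auto simp: spec_join_def foldr_join image_iff) (metis atLeastLessThan_iff zero_le)

lemma outcome_Hang: "x \<noteq> Fall \<longleftrightarrow> x = Hang" by (cases x) auto

lemma key:
  assumes "Z S (cval (Node l r))" "\<not> Z S (cval l)" "\<not> Z S (cval r)" "S \<subseteq> S'"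
  shows "Z S' (cval l) \<longleftrightarrow> Z S' (cval r)"
proof -
  define A B where "A = K S (G (cval l))" "B = K S (G (cval r))"
  have "K S (G (cval (Node l r))) = 0" using assms(1) by (simp only: Z_G)
  then have "A + B + - A + - B = 0" unfolding A_B_def by (simp only: Z_Node)
  then have "A + B = B + A" by (rule commute_from_comm)
  then obtain z p q where zpq: "A = zp z p" "B = zp z q" using centralizer by blast
  have "p \<noteq> 0" "q \<noteq> 0" using assms(2,3) zpq A_B_def by (auto simp: Z_G)
  have "Z S' (cval l) \<longleftrightarrow> K S' A = 0" using assms(4) A_B_def by (simp add: Z_G K_K)
  also have "\<dots> \<longleftrightarrow> K S' z = 0" using zpq \<open>p \<noteq> 0\<close> by (simp add: K_zp zp_eq_0)
  also have "\<dots> \<longleftrightarrow> K S' B = 0" using zpq \<open>q \<noteq> 0\<close> by (simp add: K_zp zp_eq_0)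
  also have "\<dots> \<longleftrightarrow> Z S' (cval r)" using assms(4) A_B_def by (simp add: Z_G K_K)
  finally show ?thesis .
qed


theorem theorem1:
  fixes V :: "'a set" and T :: "'a word ctree" and g :: "nat \<Rightarrow> 'a set \<Rightarrow> outcome"
  assumes "finite V"
    and "\<forall>w\<in>set (leaves T). word_over V w"
    and "\<forall>i<length (leaves T). is_spec V (g i) \<and> solves V (leaves T ! i) (g i)"
  defines "f \<equiv> spec_join (length (leaves T)) g"
  shows "(solves V (cval T) f \<longleftrightarrow>
           \<not> (\<exists>u\<in>internal_nodes T. \<exists>S. S \<subseteq> V \<and> f S = Hang \<and> is_zero (kill S (cval u))))
       \<and> ((\<forall>S. S \<subseteq> V \<and> f S = Hang \<longrightarrow>
             (\<forall>l r. Node l r \<in> internal_nodes T \<longrightarrow>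
               (\<forall>\<phi>1 \<phi>2. solves V (cval l) \<phi>1 \<and> solves V (cval r) \<phi>2 \<longrightarrow>
                  (\<exists>S'. S \<subseteq> S' \<and> S' \<subseteq> V \<and> \<phi>1 S' \<noteq> \<phi>2 S'))))
          \<longrightarrow> solves V (cval T) f)"
proof -
  have fF: "f S = Fall \<longleftrightarrow> (\<exists>w\<in>set (leaves T). Z S w)" if "S \<subseteq> V" for S
  proof -
    have "f S = Fall \<longleftrightarrow> (\<exists>i<length (leaves T). g i S = Fall)"
      unfolding f_def by (rule spec_join_Fall)
    also have "\<dots> \<longleftrightarrow> (\<exists>i<length (leaves T). Z S (leaves T ! i))"
      using assms(3) that unfolding solves_def by auto
    also have "\<dots> \<longleftrightarrow> (\<exists>w\<in>set (leaves T). Z S w)" by (metis in_set_conv_nth)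
    finally show ?thesis .
  qed
  have P1: "solves V (cval T) f \<longleftrightarrow>
           \<not> (\<exists>u\<in>internal_nodes T. \<exists>S. S \<subseteq> V \<and> f S = Hang \<and> Z S (cval u))"
  proof
    assume s: "solves V (cval T) f"
    show "\<not> (\<exists>u\<in>internal_nodes T. \<exists>S. S \<subseteq> V \<and> f S = Hang \<and> Z S (cval u))"
    proof
      assume "\<exists>u\<in>internal_nodes T. \<exists>S. S \<subseteq> V \<and> f S = Hang \<and> Z S (cval u)"
      then obtain u S where "u \<in> internal_nodes T" "S \<subseteq> V" "f S = Hang" "Z S (cval u)" by blast
      then have "Z S (cval T)" by (blast intro: node_zero_root)
      then show False using s \<open>S \<subseteq> V\<close> \<open>f S = Hang\<close> unfolding solves_def by auto
    qed
  next
    assume h: "\<not> (\<exists>u\<in>internal_nodes T. \<exists>S. S \<subseteq> V \<and> f S = Hang \<and> Z S (cval u))"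
    show "solves V (cval T) f"
      unfolding solves_def
    proof (intro allI impI)
      fix S assume SV: "S \<subseteq> V"
      show "Z S (cval T) \<longleftrightarrow> f S = Fall"
      proof (cases "f S = Fall")
        case True
        then obtain w where "w \<in> set (leaves T)" "Z S w" using fF SV by blast
        then show ?thesis using True leaf_zero_root by blast
      next
        case False
        then have hang: "f S = Hang" by (simp add: outcome_Hang)
        have "\<not> Z S (cval T)"
        proof (cases T)
          case (Leaf w)
          then show ?thesis using fF[OF SV] False by simp
        next
          case (Node l r)
          then have "T \<in> internal_nodes T" by simp
          then show ?thesis using h SV hang by blast
        qed
        then show ?thesis using False by simp
      qed
    qed
  qed
  have P2: "solves V (cval T) f" if H: "\<forall>S. S \<subseteq> V \<and> f S = Hang \<longrightarrow>
             (\<forall>l r. Node l r \<in> internal_nodes T \<longrightarrow>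
               (\<forall>\<phi>1 \<phi>2. solves V (cval l) \<phi>1 \<and> solves V (cval r) \<phi>2 \<longrightarrow>
                  (\<exists>S'. S \<subseteq> S' \<and> S' \<subseteq> V \<and> \<phi>1 S' \<noteq> \<phi>2 S')))"
  proof -
    have "\<not> (\<exists>u\<in>internal_nodes T. \<exists>S. S \<subseteq> V \<and> f S = Hang \<and> Z S (cval u))"
    proof
      assume "\<exists>u\<in>internal_nodes T. \<exists>S. S \<subseteq> V \<and> f S = Hang \<and> Z S (cval u)"
      then obtain u S where u: "u \<in> internal_nodes T" "S \<subseteq> V" "f S = Hang" "Z S (cval u)" by blast
      have nl: "\<forall>w\<in>set (leaves T). \<not> Z S w" using fF[OF u(2)] u(3) by auto
      have sub: "internal_nodes u \<subseteq> internal_nodes T" "set (leaves u) \<subseteq> set (leaves T)"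
        using sub_nodes[OF u(1)] by auto
      obtain l r where lr: "Node l r \<in> internal_nodes u" "Z S (cval (Node l r))"
          "\<not> Z S (cval l)" "\<not> Z S (cval r)"
        using minimal_node[of u S] nl sub u(4) by blast
      define \<phi>1 where "\<phi>1 = (\<lambda>S'. if Z S' (cval l) then Fall else Hang)"
      define \<phi>2 where "\<phi>2 = (\<lambda>S'. if Z S' (cval r) then Fall else Hang)"
      have sol: "solves V (cval l) \<phi>1 \<and> solves V (cval r) \<phi>2"
        unfolding solves_def \<phi>1_def \<phi>2_def by auto
      have nd: "Node l r \<in> internal_nodes T" using lr(1) sub by blast
      have su: "S \<subseteq> V \<and> f S = Hang" using u(2,3) by (rule conjI)
      obtain S' where S': "S \<subseteq> S'" "S' \<subseteq> V" "\<phi>1 S' \<noteq> \<phi>2 S'"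
        using H[rule_format, OF su nd sol] by (elim exE conjE)
      have "Z S' (cval l) \<longleftrightarrow> Z S' (cval r)" using key[OF lr(2-4) S'(1)] .
      then show False using S'(3) unfolding \<phi>1_def \<phi>2_def by simp
    qed
    then show ?thesis using P1 by blast
  qed
  show ?thesis using P1 P2 by blast
qed

end
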